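(* Let $\mathcal I$ be an ideal on $\mathbb N$ with the Baire property, and let $\sum_n x_n$ be a series in a Banach space $X$. Then $\sum_n x_n$ is unconditionally convergent if and only if the set $$B(\mathcal I,(x_n)):=\left\{t \in \{-1,1\}^{\mathbb N} \colon \sum_n t(n)x_n \text{ is } \mathcal I\text{-convergent}\right\}$$ is nonmeager in $\{-1,1\}^{\mathbb N}$ (with the product topology).
   Context: $\mathbb N=\{1,2,\dots\}$. An ideal on $\mathbb N$ is a family $\mathcal I\subset\mathcal P(\mathbb N)$ closed under finite unions and subsets, with $\mathbb N\notin\mathcal I$ and containing all finite subsets of $\mathbb N$. Identifying subsets of $\mathbb N$ with their characteristic functions, $\mathcal I$ is regarded as a subset of the Cantor space $\{0,1\}^{\mathbb N}$ (product topology), and "$\mathcal I$ has the Baire property" refers to this subset. A sequence $(y_n)$ in a normed space is $\mathcal I$-convergent to $y$ if $\{n:\|y_n-y\|>\varepsilon\}\in\mathcal I$ for every $\varepsilon>0$; a series is $\mathcal I$-convergent if its sequence of partial sums is $\mathcal I$-convergent to some element. A series $\sum_n x_n$ is unconditionally convergent if $\sum_n x_{p(n)}$ converges for every permutation $p$ of $\mathbb N$. Banach spaces are over $\mathbb R$. *)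

theory Defs
  imports "HOL-Analysis.Analysis"
begin

text \<open>Natural numbers N = {1,2,...} are represented by the type nat, shifted by one
  (index n of the paper corresponds to n-1 here).\<close>

definition is_ideal :: "nat set set \<Rightarrow> bool" where
  "is_ideal I \<longleftrightarrow>
     (\<forall>A\<in>I. \<forall>B\<in>I. A \<union> B \<in> I) \<and>
     (\<forall>A\<in>I. \<forall>B. B \<subseteq> A \<longrightarrow> B \<in> I) \<and>
     UNIV \<notin> I \<and>
     (\<forall>F. finite F \<longrightarrow> F \<in> I)"

definition char_fun :: "nat set \<Rightarrow> (nat \<Rightarrow> bool)" where
  "char_fun A = (\<lambda>n. n \<in> A)"

definition nowhere_dense :: "'a::topological_space set \<Rightarrow> bool" where
  "nowhere_dense A \<longleftrightarrow> interior (closure A) = {}"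

definition meager :: "'a::topological_space set \<Rightarrow> bool" where
  "meager A \<longleftrightarrow> (\<exists>F :: nat \<Rightarrow> 'a set. (\<forall>n. nowhere_dense (F n)) \<and> A \<subseteq> (\<Union>n. F n))"

definition baire_property :: "'a::topological_space set \<Rightarrow> bool" where
  "baire_property A \<longleftrightarrow> (\<exists>U. open U \<and> meager ((A - U) \<union> (U - A)))"

definition I_convergent :: "nat set set \<Rightarrow> (nat \<Rightarrow> 'a::real_normed_vector) \<Rightarrow> 'a \<Rightarrow> bool" where
  "I_convergent I y L \<longleftrightarrow> (\<forall>\<epsilon>>0. {n. norm (y n - L) > \<epsilon>} \<in> I)"

definition I_series_convergent :: "nat set set \<Rightarrow> (nat \<Rightarrow> 'a::real_normed_vector) \<Rightarrow> bool" where
  "I_series_convergent I x \<longleftrightarrow> (\<exists>L. I_convergent I (\<lambda>n. \<Sum>i\<le>n. x i) L)"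

definition unconditionally_convergent :: "(nat \<Rightarrow> 'a::real_normed_vector) \<Rightarrow> bool" where
  "unconditionally_convergent x \<longleftrightarrow> (\<forall>p. bij p \<longrightarrow> summable (\<lambda>n. x (p n)))"

text \<open>Sign sequences t in {-1,1}^N are encoded by nat => bool (True = 1, False = -1);
  this is a homeomorphism of the product spaces.\<close>
definition sgn_val :: "bool \<Rightarrow> real" where
  "sgn_val b = (if b then 1 else -1)"

definition B_set :: "nat set set \<Rightarrow> (nat \<Rightarrow> 'a::real_normed_vector) \<Rightarrow> (nat \<Rightarrow> bool) set" where
  "B_set I x = {t. I_series_convergent I (\<lambda>n. sgn_val (t n) *\<^sub>R x n)}"

end

theory Submission
  imports Defs
begin


definition cyl :: "(nat \<Rightarrow> bool) \<Rightarrow> nat \<Rightarrow> (nat \<Rightarrow> bool) set" where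
  "cyl s N = {g. \<forall>i<N. g i = s i}"

definition nd :: "(nat \<Rightarrow> bool) set \<Rightarrow> bool" where
  "nd S \<longleftrightarrow> (\<forall>s N. \<exists>t M. N < M \<and> (\<forall>i<N. t i = s i) \<and> cyl t M \<inter> S = {})"

definition mg :: "(nat \<Rightarrow> bool) set \<Rightarrow> bool" where
  "mg S \<longleftrightarrow> (\<exists>F. (\<forall>n::nat. nd (F n)) \<and> S \<subseteq> (\<Union>n. F n))"

lemma open_cyl: "open (cyl s N)"
proof -
  have "open {f::nat\<Rightarrow>bool. \<forall>i\<in>{..<N}. f (id i) \<in> {s i}}"
    by (rule product_topology_basis') (auto intro: open_discrete)
  moreover have "{f::nat\<Rightarrow>bool. \<forall>i\<in>{..<N}. f (id i) \<in> {s i}} = cyl s N"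
    by (auto simp: cyl_def)
  ultimately show ?thesis by simp
qed

lemma self_cyl[simp]: "s \<in> cyl s N"
  by (simp add: cyl_def)

lemma cyl_sub: "N \<le> M \<Longrightarrow> \<forall>i<N. t i = s i \<Longrightarrow> cyl t M \<subseteq> cyl s N"
  by (auto simp: cyl_def)

lemma open_cyl_sub:
  fixes U :: "(nat \<Rightarrow> bool) set"
  assumes "open U" "g \<in> U" shows "\<exists>N. cyl g N \<subseteq> U"
proof -
  have "openin (product_topology (\<lambda>i. euclidean) UNIV) U"
    using assms(1) by (simp add: open_fun_def)
  from product_topology_open_contains_basis[OF this assms(2)]
  obtain X :: "nat \<Rightarrow> bool set" where X: "g \<in> (\<Pi>\<^sub>E i\<in>UNIV. X i)"
     "finite {i. X i \<noteq> topspace euclidean}" "(\<Pi>\<^sub>E i\<in>UNIV. X i) \<subseteq> U"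
    by blast
  obtain N where N: "{i. X i \<noteq> UNIV} \<subseteq> {..<N}"
    using X(2) finite_nat_bounded by auto
  have "cyl g N \<subseteq> (\<Pi>\<^sub>E i\<in>UNIV. X i)"
  proof
    fix h assume h: "h \<in> cyl g N"
    have "h i \<in> X i" for i
    proof (cases "X i = UNIV")
      case False
      then have "i < N" using N by auto
      then show ?thesis using h X(1) by (auto simp: cyl_def PiE_iff)
    qed auto
    then show "h \<in> (\<Pi>\<^sub>E i\<in>UNIV. X i)" by (auto simp: PiE_iff)
  qed
  then show ?thesis using X(3) by blast
qed

lemma nowhere_dense_iff: "nowhere_dense S \<longleftrightarrow> nd S"
proof
  assume a: "nowhere_dense S"
  show "nd S" unfolding nd_def
  proof (intro allI)
    fix s N
    have "\<not> cyl s N \<subseteq> closure S"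
    proof
      assume "cyl s N \<subseteq> closure S"
      then have "cyl s N \<subseteq> interior (closure S)"
        using open_cyl interior_maximal by blast
      then have "s \<in> interior (closure S)" using self_cyl[of s N] by blast
      then show False using a by (simp add: nowhere_dense_def)
    qed
    then obtain t where t: "t \<in> cyl s N" "t \<notin> closure S" by blast
    have "open (cyl s N - closure S)" by (intro open_Diff open_cyl closed_closure)
    then obtain M where M: "cyl t M \<subseteq> cyl s N - closure S"
      using open_cyl_sub[of "cyl s N - closure S" t] t by auto
    have "cyl t (max M (Suc N)) \<subseteq> cyl t M" by (rule cyl_sub) auto
    then have "cyl t (max M (Suc N)) \<inter> S = {}" using M closure_subset by blast
    moreover have "\<forall>i<N. t i = s i" using t by (auto simp: cyl_def)
    ultimately show "\<exists>t M. N < M \<and> (\<forall>i<N. t i = s i) \<and> cyl t M \<inter> S = {}"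
      by (intro exI[of _ t] exI[of _ "max M (Suc N)"]) auto
  qed
next
  assume a: "nd S"
  show "nowhere_dense S" unfolding nowhere_dense_def
  proof (rule ccontr)
    assume "interior (closure S) \<noteq> {}"
    then obtain f where f: "f \<in> interior (closure S)" by blast
    obtain N where N: "cyl f N \<subseteq> interior (closure S)"
      using open_cyl_sub[OF open_interior f] by blast
    obtain t M where tM: "N < M" "\<forall>i<N. t i = f i" "cyl t M \<inter> S = {}"
      using a unfolding nd_def by (elim allE[of _ f] allE[of _ N]) auto
    have "cyl t M \<subseteq> cyl f N" using tM by (intro cyl_sub) auto
    then have "t \<in> interior (closure S)" using N self_cyl[of t M] by blast
    then have "t \<in> closure S" using interior_subset by blast
    moreover have "cyl t M \<inter> closure S = {}"
      using tM(3) open_cyl by (simp add: open_Int_closure_eq_empty)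
    ultimately show False using self_cyl[of t M] by blast
  qed
qed

lemma meager_iff: "meager S \<longleftrightarrow> mg S"
  by (simp add: meager_def mg_def nowhere_dense_iff)



lemma nd_subset: assumes "nd S" "T \<subseteq> S" shows "nd T"
  unfolding nd_def
proof (intro allI)
  fix s N
  obtain t M where "N < M" "\<forall>i<N. t i = s i" "cyl t M \<inter> S = {}"
    using assms(1) unfolding nd_def by (elim allE[of _ s] allE[of _ N]) auto
  then show "\<exists>t M. N < M \<and> (\<forall>i<N. t i = s i) \<and> cyl t M \<inter> T = {}"
    using assms(2) by (intro exI[of _ t] exI[of _ M]) auto
qed

lemma nd_empty: "nd {}"
  unfolding nd_def by (metis Int_empty_right lessI)

lemma mg_subset: "mg S \<Longrightarrow> T \<subseteq> S \<Longrightarrow> mg T"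
  unfolding mg_def by blast

lemma mg_empty: "mg {}"
  unfolding mg_def using nd_empty by (intro exI[of _ "\<lambda>n. {}"]) auto

lemma mg_UN:
  assumes "\<And>k::nat. mg (S k)" shows "mg (\<Union>k. S k)"
proof -
  have "\<forall>k. \<exists>F. (\<forall>n::nat. nd (F n)) \<and> S k \<subseteq> (\<Union>n. F n)"
    using assms unfolding mg_def by blast
  from choice[OF this] obtain FF where FF: "\<And>k. (\<forall>n::nat. nd (FF k n)) \<and> S k \<subseteq> (\<Union>n. FF k n)"
    by blast
  define G where "G j = FF (fst (prod_decode j)) (snd (prod_decode j))" for j
  have "\<forall>j. nd (G j)" using FF by (simp add: G_def)
  moreover have "(\<Union>k. S k) \<subseteq> (\<Union>j. G j)"
  proof
    fix x assume "x \<in> (\<Union>k. S k)"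
    then obtain k n where "x \<in> FF k n" using FF by blast
    then have "x \<in> G (prod_encode (k, n))" by (simp add: G_def)
    then show "x \<in> (\<Union>j. G j)" by blast
  qed
  ultimately show ?thesis unfolding mg_def by blast
qed

lemma mg_Un: "mg A \<Longrightarrow> mg B \<Longrightarrow> mg (A \<union> B)"
proof -
  assume a: "mg A" "mg B"
  have "mg (\<Union>k. (if k = (0::nat) then A else B))"
    by (rule mg_UN) (use a in auto)
  moreover have "A \<union> B \<subseteq> (\<Union>k. (if k = (0::nat) then A else B))"
  proof
    fix x assume "x \<in> A \<union> B"
    then show "x \<in> (\<Union>k. (if k = (0::nat) then A else B))"
    proof
      assume "x \<in> A" then show ?thesis by (intro UN_I[of 0]) auto
    next
      assume "x \<in> B" then show ?thesis by (intro UN_I[of 1]) auto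
    qed
  qed
  ultimately show ?thesis using mg_subset by blast
qed

lemma mg_finite_UN: "finite D \<Longrightarrow> (\<And>d. d \<in> D \<Longrightarrow> mg (S d)) \<Longrightarrow> mg (\<Union>d\<in>D. S d)"
proof (induction D rule: finite_induct)
  case empty then show ?case by (simp add: mg_empty)
next
  case (insert d D) then show ?case by (simp add: mg_Un)
qed

primrec iter :: "(nat \<Rightarrow> 'b \<Rightarrow> 'b) \<Rightarrow> 'b \<Rightarrow> nat \<Rightarrow> 'b" where
  "iter f a 0 = a"
| "iter f a (Suc k) = f k (iter f a k)"

lemma nested_lim:
  fixes st :: "nat \<Rightarrow> nat \<Rightarrow> bool" and len :: "nat \<Rightarrow> nat"
  assumes inc: "\<And>k. len k < len (Suc k)" and ext: "\<And>k i. i < len k \<Longrightarrow> st (Suc k) i = st k i"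
  shows "(\<lambda>i. st (Suc i) i) \<in> cyl (st k) (len k)"
proof -
  have lm: "k \<le> j \<Longrightarrow> len k \<le> len j" for k j
    by (rule lift_Suc_mono_le[of len]) (use inc less_imp_le in auto)
  have agree: "k \<le> j \<Longrightarrow> i < len k \<Longrightarrow> st j i = st k i" for j k i
  proof (induction j rule: dec_induct)
    case (step j)
    have "len k \<le> len j" using step.hyps(1) lm by simp
    then show ?case using step ext[of i j] by simp
  qed simp
  have lenk: "k \<le> len k" for k
    by (induction k) (use inc in \<open>auto simp: Suc_le_eq intro: le_less_trans\<close>)
  show ?thesis unfolding cyl_def
  proof (intro CollectI allI impI)
    fix i assume i: "i < len k"
    have "i < len (Suc i)" using lenk[of "Suc i"] by simp
    then have "st (max k (Suc i)) i = st (Suc i) i" by (intro agree) auto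
    moreover have "st (max k (Suc i)) i = st k i" using i by (intro agree) auto
    ultimately show "st (Suc i) i = st k i" by simp
  qed
qed

lemma baire: "\<not> mg UNIV"
proof
  assume "mg UNIV"
  then obtain F where F: "\<And>n. nd (F n)" "UNIV \<subseteq> (\<Union>n::nat. F n)"
    unfolding mg_def by blast
  have "\<forall>z. \<exists>p. snd (snd z) < snd p \<and> (\<forall>i<snd (snd z). fst p i = fst (snd z) i)
          \<and> cyl (fst p) (snd p) \<inter> F (fst z) = {}"
  proof
    fix z :: "nat \<times> (nat \<Rightarrow> bool) \<times> nat"
    obtain t M where "snd (snd z) < M" "\<forall>i<snd (snd z). t i = fst (snd z) i"
      "cyl t M \<inter> F (fst z) = {}"
      using F(1)[of "fst z"] unfolding nd_def by (elim allE[of _ "fst (snd z)"] allE[of _ "snd (snd z)"]) auto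
    then show "\<exists>p. snd (snd z) < snd p \<and> (\<forall>i<snd (snd z). fst p i = fst (snd z) i)
          \<and> cyl (fst p) (snd p) \<inter> F (fst z) = {}"
      by (intro exI[of _ "(t, M)"]) auto
  qed
  from choice[OF this] obtain Ch where Ch: "\<And>z. snd (snd z) < snd (Ch z) \<and> (\<forall>i<snd (snd z). fst (Ch z) i = fst (snd z) i)
          \<and> cyl (fst (Ch z)) (snd (Ch z)) \<inter> F (fst z) = {}"
    by blast
  define sq where "sq = iter (\<lambda>k p. Ch (k, p)) ((\<lambda>_. False), 0)"
  have sqS: "sq (Suc k) = Ch (k, sq k)" for k by (simp add: sq_def)
  define lim where "lim = (\<lambda>i. fst (sq (Suc i)) i)"
  have limc: "lim \<in> cyl (fst (sq k)) (snd (sq k))" for k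
    unfolding lim_def
  proof (rule nested_lim[of "\<lambda>k. snd (sq k)" "\<lambda>k. fst (sq k)"])
    fix k show "snd (sq k) < snd (sq (Suc k))" using Ch[of "(k, sq k)"] by (simp add: sqS)
  next
    fix k i assume "i < snd (sq k)"
    then show "fst (sq (Suc k)) i = fst (sq k) i" using Ch[of "(k, sq k)"] by (simp add: sqS)
  qed
  have "lim \<notin> F k" for k
    using limc[of "Suc k"] Ch[of "(k, sq k)"] by (auto simp: sqS)
  then show False using F(2) by blast
qed

definition flip :: "nat set \<Rightarrow> (nat \<Rightarrow> bool) \<Rightarrow> (nat \<Rightarrow> bool)" where
  "flip D g = (\<lambda>i. if i \<in> D then \<not> g i else g i)"

lemma flip_flip[simp]: "flip D (flip D g) = g"
  by (auto simp: flip_def)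

lemma flip_cyl: "flip D g \<in> cyl (flip D t) M \<longleftrightarrow> g \<in> cyl t M"
  by (auto simp: flip_def cyl_def)

lemma nd_flip: "nd S \<Longrightarrow> nd (flip D ` S)"
  unfolding nd_def
proof (intro allI)
  fix s N assume a: "\<forall>s N. \<exists>t M. N < M \<and> (\<forall>i<N. t i = s i) \<and> cyl t M \<inter> S = {}"
  obtain t M where tM: "N < M" "\<forall>i<N. t i = flip D s i" "cyl t M \<inter> S = {}"
    using a by (elim allE[of _ "flip D s"] allE[of _ N]) auto
  have "\<forall>i<N. flip D t i = s i" using tM(2) by (auto simp: flip_def)
  moreover have "cyl (flip D t) M \<inter> flip D ` S = {}"
    using tM(3) flip_cyl[of D _ t M] by auto
  ultimately show "\<exists>t M. N < M \<and> (\<forall>i<N. t i = s i) \<and> cyl t M \<inter> flip D ` S = {}"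
    using tM(1) by blast
qed

lemma mg_flip: "mg S \<Longrightarrow> mg (flip D ` S)"
  unfolding mg_def
proof -
  assume "\<exists>F. (\<forall>n::nat. nd (F n)) \<and> S \<subseteq> (\<Union>n. F n)"
  then obtain F where F: "\<forall>n::nat. nd (F n)" "S \<subseteq> (\<Union>n. F n)" by blast
  have "\<forall>n. nd (flip D ` F n)" using F(1) nd_flip by blast
  moreover have "flip D ` S \<subseteq> (\<Union>n. flip D ` F n)" using F(2) by blast
  ultimately show "\<exists>F. (\<forall>n::nat. nd (F n)) \<and> flip D ` S \<subseteq> (\<Union>n. F n)"
    by (intro exI[of _ "\<lambda>n. flip D ` F n"] conjI)
qed



lemma char_fun_apply[simp]: "char_fun A i = (i \<in> A)"
  by (simp add: char_fun_def)

lemma char_fun_set: "g = char_fun {i. g i}"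
  by (simp add: char_fun_def)

lemma flip_char: "flip D (char_fun A) = char_fun ((A - D) \<union> (D - A))"
  by (auto simp: flip_def char_fun_def)

lemma ideal_sub: "is_ideal I \<Longrightarrow> A \<in> I \<Longrightarrow> B \<subseteq> A \<Longrightarrow> B \<in> I"
  unfolding is_ideal_def by blast

lemma ideal_Un: "is_ideal I \<Longrightarrow> A \<in> I \<Longrightarrow> B \<in> I \<Longrightarrow> A \<union> B \<in> I"
  unfolding is_ideal_def by blast

lemma ideal_fin: "is_ideal I \<Longrightarrow> finite A \<Longrightarrow> A \<in> I"
  unfolding is_ideal_def by blast

lemma ideal_UNIV: "is_ideal I \<Longrightarrow> UNIV \<notin> I"
  unfolding is_ideal_def by blast

lemma ideal_symdiff: "is_ideal I \<Longrightarrow> A \<in> I \<Longrightarrow> finite D \<Longrightarrow> (A - D) \<union> (D - A) \<in> I"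
  by (rule ideal_sub[of I "A \<union> D"]) (auto intro: ideal_Un ideal_fin)

lemma ideal_meager:
  assumes I: "is_ideal I" and bp: "baire_property (char_fun ` I)"
  shows "mg (char_fun ` I)"
proof (rule ccontr)
  define J where "J = char_fun ` I"
  assume nm: "\<not> mg (char_fun ` I)"
  then have nmJ: "\<not> mg J" by (simp add: J_def)
  obtain U where U: "open U" "mg ((J - U) \<union> (U - J))"
    using bp unfolding baire_property_def meager_iff J_def by blast
  have "U \<noteq> {}"
  proof
    assume "U = {}"
    then have "J \<subseteq> (J - U) \<union> (U - J)" by blast
    then show False using U(2) nmJ mg_subset by blast
  qed
  then obtain g where "g \<in> U" by blast
  then obtain N where N: "cyl g N \<subseteq> U" using open_cyl_sub U(1) by blast
  have mgZ: "mg (cyl g N - J)"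
    by (rule mg_subset[OF U(2)]) (use N in blast)
  have cover: "UNIV - J \<subseteq> (\<Union>D\<in>Pow {..<N}. flip D ` (cyl g N - J))"
  proof
    fix h assume h: "h \<in> UNIV - J"
    define D where "D = {i. i < N \<and> h i \<noteq> g i}"
    have D: "D \<in> Pow {..<N}" by (auto simp: D_def)
    have "flip D h \<in> cyl g N" by (auto simp: cyl_def flip_def D_def)
    moreover have "flip D h \<notin> J"
    proof
      assume "flip D h \<in> J"
      then obtain A where A: "A \<in> I" "flip D h = char_fun A" by (auto simp: J_def)
      then have "h = char_fun ((A - D) \<union> (D - A))"
        by (metis flip_char flip_flip)
      moreover have "(A - D) \<union> (D - A) \<in> I"
        by (rule ideal_symdiff[OF I A(1)]) (auto simp: D_def)
      ultimately show False using h by (auto simp: J_def)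
    qed
    ultimately have "h \<in> flip D ` (cyl g N - J)"
      by (metis DiffI flip_flip image_eqI)
    then show "h \<in> (\<Union>D\<in>Pow {..<N}. flip D ` (cyl g N - J))" using D by blast
  qed
  have "mg (\<Union>D\<in>Pow {..<N}. flip D ` (cyl g N - J))"
    by (rule mg_finite_UN) (auto intro: mg_flip mgZ)
  then have mgC: "mg (UNIV - J)" using cover mg_subset by blast
  have "J \<subseteq> flip UNIV ` (UNIV - J)"
  proof
    fix h assume "h \<in> J"
    then obtain A where A: "A \<in> I" "h = char_fun A" by (auto simp: J_def)
    have "flip UNIV h \<notin> J"
    proof
      assume "flip UNIV h \<in> J"
      then obtain B where B: "B \<in> I" "flip UNIV h = char_fun B" by (auto simp: J_def)
      have "B = - A" using B(2) A(2) by (auto simp: flip_def char_fun_def fun_eq_iff)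
      then have "UNIV \<in> I" using ideal_Un[OF I A(1) B(1)] by (simp add: Un_commute)
      then show False using ideal_UNIV[OF I] by blast
    qed
    then show "h \<in> flip UNIV ` (UNIV - J)" by (metis DiffI UNIV_I flip_flip image_eqI)
  qed
  then have "mg J" using mg_flip[OF mgC] mg_subset by blast
  then show False using nmJ by blast
qed

lemma nd_Un: assumes "nd A" "nd B" shows "nd (A \<union> B)"
  unfolding nd_def
proof (intro allI)
  fix s N
  obtain t M where t: "N < M" "\<forall>i<N. t i = s i" "cyl t M \<inter> A = {}"
    using assms(1) unfolding nd_def by (elim allE[of _ s] allE[of _ N]) auto
  obtain t' M' where t': "M < M'" "\<forall>i<M. t' i = t i" "cyl t' M' \<inter> B = {}"
    using assms(2) unfolding nd_def by (elim allE[of _ t] allE[of _ M]) auto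
  have "cyl t' M' \<subseteq> cyl t M" using t' by (intro cyl_sub) auto
  then have "cyl t' M' \<inter> (A \<union> B) = {}" using t(3) t'(3) by blast
  moreover have "\<forall>i<N. t' i = s i" using t t' by auto
  ultimately show "\<exists>t M. N < M \<and> (\<forall>i<N. t i = s i) \<and> cyl t M \<inter> (A \<union> B) = {}"
    using t(1) t'(1) by (intro exI[of _ t'] exI[of _ M']) auto
qed

definition merge :: "(nat \<Rightarrow> bool) \<Rightarrow> (nat \<Rightarrow> bool) \<Rightarrow> nat \<Rightarrow> (nat \<Rightarrow> bool)" where
  "merge s u N = (\<lambda>i. if i < N then s i else u i)"

lemma multi_avoid:
  assumes "nd S" "finite P"
  shows "\<exists>u M. N < M \<and> (\<forall>s\<in>P. cyl (merge s u N) M \<inter> S = {})"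
  using assms(2)
proof (induction P rule: finite_induct)
  case empty then show ?case by (intro exI[of _ "\<lambda>_. False"] exI[of _ "Suc N"]) auto
next
  case (insert s P)
  then obtain u M where uM: "N < M" "\<forall>s\<in>P. cyl (merge s u N) M \<inter> S = {}" by blast
  obtain t M' where t: "M < M'" "\<forall>i<M. t i = merge s u N i" "cyl t M' \<inter> S = {}"
    using assms(1) unfolding nd_def by (elim allE[of _ "merge s u N"] allE[of _ M]) auto
  have "merge s t N = t" using t(2) uM(1) by (auto simp: merge_def fun_eq_iff)
  then have 1: "cyl (merge s t N) M' \<inter> S = {}" using t(3) by simp
  have 2: "cyl (merge s' t N) M' \<inter> S = {}" if "s' \<in> P" for s'
  proof -
    have "cyl (merge s' t N) M' \<subseteq> cyl (merge s' u N) M"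
      using t(1,2) by (intro cyl_sub) (auto simp: merge_def)
    then show ?thesis using uM(2) that by blast
  qed
  show ?case using 1 2 uM(1) t(1) by (intro exI[of _ t] exI[of _ M']) auto
qed

lemma finite_prefixes: "finite {s::nat\<Rightarrow>bool. \<forall>i\<ge>N. s i = False}"
proof -
  have "{s::nat\<Rightarrow>bool. \<forall>i\<ge>N. s i = False} \<subseteq> char_fun ` Pow {..<N}"
  proof
    fix s :: "nat \<Rightarrow> bool" assume "s \<in> {s. \<forall>i\<ge>N. s i = False}"
    then have "{i. s i} \<in> Pow {..<N}" by (auto simp: not_less[symmetric])
    then show "s \<in> char_fun ` Pow {..<N}" using char_fun_set[of s] by blast
  qed
  then show ?thesis by (rule finite_subset) auto
qed

lemma avoid_all:
  assumes "nd S"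
  shows "\<exists>u M. N < M \<and> (\<forall>s. cyl (merge s u N) M \<inter> S = {})"
proof -
  obtain u M where uM: "N < M" "\<forall>s\<in>{s::nat\<Rightarrow>bool. \<forall>i\<ge>N. s i = False}. cyl (merge s u N) M \<inter> S = {}"
    using multi_avoid[OF assms finite_prefixes[of N], of N] by (elim exE conjE) (rule that)
  have "cyl (merge s u N) M \<inter> S = {}" for s
  proof -
    have "merge s u N = merge (\<lambda>i. i < N \<and> s i) u N" by (auto simp: merge_def)
    moreover have "(\<lambda>i. i < N \<and> s i) \<in> {s::nat\<Rightarrow>bool. \<forall>i\<ge>N. s i = False}" by auto
    then have "cyl (merge (\<lambda>i. i < N \<and> s i) u N) M \<inter> S = {}" by (rule bspec[OF uM(2)])
    ultimately show ?thesis by simp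
  qed
  then show ?thesis using uM(1) by blast
qed

lemma block_unique:
  fixes n :: "nat \<Rightarrow> nat"
  assumes "strict_mono n" "n k \<le> i" "i < n (Suc k)" "n k' \<le> i" "i < n (Suc k')"
  shows "k = k'"
proof (rule ccontr)
  assume "k \<noteq> k'"
  then consider "Suc k \<le> k'" | "Suc k' \<le> k" by linarith
  then show False
  proof cases
    case 1 then have "n (Suc k) \<le> n k'" using assms(1) strict_mono_less_eq by blast
    then show False using assms by linarith
  next
    case 2 then have "n (Suc k') \<le> n k" using assms(1) strict_mono_less_eq by blast
    then show False using assms by linarith
  qed
qed

lemma talagrand:
  assumes I: "is_ideal I" and m: "mg (char_fun ` I)"
  shows "\<exists>n::nat\<Rightarrow>nat. n 0 = 0 \<and> (\<forall>k. n k < n (Suc k)) \<and>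
           (\<forall>A\<in>I. \<exists>m. \<forall>k\<ge>m. \<not> {n k..<n (Suc k)} \<subseteq> A)"
proof -
  obtain F where F: "\<And>j. nd (F j)" "char_fun ` I \<subseteq> (\<Union>j::nat. F j)"
    using m unfolding mg_def by blast
  define G where "G k = (\<Union>j\<in>{..k}. F j)" for k
  have ndG: "nd (G k)" for k
  proof (induction k)
    case 0 then show ?case using F(1) by (simp add: G_def)
  next
    case (Suc k)
    have "G (Suc k) = F (Suc k) \<union> G k" by (simp add: G_def atMost_Suc)
    then show ?case using Suc F(1) nd_Un by simp
  qed
  have "\<forall>z. \<exists>p. snd z < snd p \<and> (\<forall>s. cyl (merge s (fst p) (snd z)) (snd p) \<inter> G (fst z) = {})"
  proof
    fix z :: "nat \<times> nat"
    obtain u M where "snd z < M" "\<forall>s. cyl (merge s u (snd z)) M \<inter> G (fst z) = {}"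
      using avoid_all[OF ndG[of "fst z"]] by blast
    then show "\<exists>p. snd z < snd p \<and> (\<forall>s. cyl (merge s (fst p) (snd z)) (snd p) \<inter> G (fst z) = {})"
      by (intro exI[of _ "(u, M)"]) auto
  qed
  from choice[OF this] obtain Ch where Ch:
    "\<And>z. snd z < snd (Ch z) \<and> (\<forall>s. cyl (merge s (fst (Ch z)) (snd z)) (snd (Ch z)) \<inter> G (fst z) = {})"
    by blast
  define n where "n = iter (\<lambda>k N. snd (Ch (k, N))) 0"
  define u where "u k = fst (Ch (k, n k))" for k
  have nS: "n (Suc k) = snd (Ch (k, n k))" for k by (simp add: n_def)
  have n0: "n 0 = 0" by (simp add: n_def)
  have ninc: "n k < n (Suc k)" for k using Ch[of "(k, n k)"] by (simp add: nS)
  have avoid: "cyl (merge s (u k) (n k)) (n (Suc k)) \<inter> G k = {}" for s k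
    using Ch[of "(k, n k)"] by (simp add: nS u_def)
  have sm: "strict_mono n" using ninc by (simp add: strict_mono_Suc_iff)
  have "\<exists>m. \<forall>k\<ge>m. \<not> {n k..<n (Suc k)} \<subseteq> A" if A: "A \<in> I" for A
  proof (rule ccontr)
    assume "\<not> (\<exists>m. \<forall>k\<ge>m. \<not> {n k..<n (Suc k)} \<subseteq> A)"
    then have inf: "\<forall>m. \<exists>k\<ge>m. {n k..<n (Suc k)} \<subseteq> A" by blast
    define K where "K = {k. {n k..<n (Suc k)} \<subseteq> A}"
    define B where "B = {i. \<exists>k\<in>K. n k \<le> i \<and> i < n (Suc k) \<and> u k i}"
    have "B \<subseteq> A" by (auto simp: B_def K_def)
    then have "B \<in> I" using ideal_sub[OF I A] by blast
    then obtain j where j: "char_fun B \<in> F j" using F(2) by blast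
    obtain k where k: "k \<ge> j" "k \<in> K" using inf by (auto simp: K_def)
    have "char_fun B \<in> G k" using j k(1) by (auto simp: G_def)
    moreover have "char_fun B \<in> cyl (merge (char_fun B) (u k) (n k)) (n (Suc k))"
      unfolding cyl_def merge_def
    proof (intro CollectI allI impI)
      fix i assume i: "i < n (Suc k)"
      show "char_fun B i = (if i < n k then char_fun B i else u k i)"
      proof (cases "i < n k")
        case False
        have "i \<in> B \<longleftrightarrow> u k i"
        proof
          assume "i \<in> B"
          then obtain k' where "k' \<in> K" "n k' \<le> i" "i < n (Suc k')" "u k' i" by (auto simp: B_def)
          moreover have "k' = k" using block_unique[OF sm, of k' i k] False i calculation by simp
          ultimately show "u k i" by simp
        next
          assume "u k i" then show "i \<in> B" unfolding B_def using k(2) False i by (intro CollectI bexI[of _ k]) auto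
        qed
        then show ?thesis using False by simp
      qed simp
    qed
    ultimately show False using avoid[of "char_fun B" k] by blast
  qed
  then show ?thesis using n0 ninc by blast
qed



definition UC :: "(nat \<Rightarrow> 'a::real_normed_vector) \<Rightarrow> bool" where
  "UC x \<longleftrightarrow> (\<forall>e>0. \<exists>N. \<forall>F. finite F \<and> F \<subseteq> {N..} \<longrightarrow> norm (sum x F) < e)"

lemma UC_signs:
  fixes x :: "nat \<Rightarrow> 'a::banach"
  assumes "UC x" shows "summable (\<lambda>n. sgn_val (t n) *\<^sub>R x n)"
  unfolding summable_Cauchy
proof (intro allI impI)
  fix e :: real assume e: "e > 0"
  obtain N where N: "\<And>F. finite F \<Longrightarrow> F \<subseteq> {N..} \<Longrightarrow> norm (sum x F) < e/2"
    using assms e unfolding UC_def by (meson half_gt_zero)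
  show "\<exists>N. \<forall>m\<ge>N. \<forall>n. norm (\<Sum>i = m..<n. sgn_val (t i) *\<^sub>R x i) < e"
  proof (intro exI allI impI)
    fix m n assume m: "N \<le> m"
    have "(\<Sum>i = m..<n. sgn_val (t i) *\<^sub>R x i) = (\<Sum>i = m..<n. if t i then x i else - x i)"
      by (intro sum.cong) (auto simp: sgn_val_def)
    also have "\<dots> = sum x ({m..<n} \<inter> {i. t i}) + sum (\<lambda>i. - x i) ({m..<n} \<inter> - {i. t i})"
      by (rule sum.If_cases) simp
    also have "\<dots> = sum x ({m..<n} \<inter> {i. t i}) - sum x ({m..<n} \<inter> - {i. t i})"
      by (simp add: sum_negf)
    finally have eq: "(\<Sum>i = m..<n. sgn_val (t i) *\<^sub>R x i) = sum x ({m..<n} \<inter> {i. t i}) - sum x ({m..<n} \<inter> - {i. t i})" .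
    have "norm (sum x ({m..<n} \<inter> {i. t i})) < e/2" using m by (intro N) auto
    moreover have "norm (sum x ({m..<n} \<inter> - {i. t i})) < e/2" using m by (intro N) auto
    ultimately show "norm (\<Sum>i = m..<n. sgn_val (t i) *\<^sub>R x i) < e"
      unfolding eq using norm_triangle_ineq4[of "sum x ({m..<n} \<inter> {i. t i})" "sum x ({m..<n} \<inter> - {i. t i})"]
      by linarith
  qed
qed

lemma UC_uncond:
  fixes x :: "nat \<Rightarrow> 'a::banach"
  assumes "UC x" shows "unconditionally_convergent x"
  unfolding unconditionally_convergent_def
proof (intro allI impI)
  fix p :: "nat \<Rightarrow> nat" assume p: "bij p"
  then have ip: "inj p" by (simp add: bij_is_inj)
  show "summable (\<lambda>n. x (p n))"
    unfolding summable_Cauchy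
  proof (intro allI impI)
    fix e :: real assume e: "e > 0"
    obtain N where N: "\<And>F. finite F \<Longrightarrow> F \<subseteq> {N..} \<Longrightarrow> norm (sum x F) < e"
      using assms e unfolding UC_def by meson
    have "finite (p -` {..<N})" using ip by (intro finite_vimageI) auto
    then obtain N' where N': "p -` {..<N} \<subseteq> {..<N'}" using finite_nat_bounded by blast
    show "\<exists>N. \<forall>m\<ge>N. \<forall>n. norm (\<Sum>i = m..<n. x (p i)) < e"
    proof (intro exI allI impI)
      fix m n assume m: "N' \<le> m"
      have "(\<Sum>i = m..<n. x (p i)) = sum x (p ` {m..<n})"
        using ip by (simp add: sum.reindex inj_on_subset)
      moreover have "p ` {m..<n} \<subseteq> {N..}"
      proof
        fix y assume "y \<in> p ` {m..<n}"
        then obtain i where i: "i \<ge> m" "y = p i" by auto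
        show "y \<in> {N..}"
        proof (rule ccontr)
          assume "y \<notin> {N..}"
          then have "i \<in> p -` {..<N}" using i by auto
          then show False using N' i m by auto
        qed
      qed
      ultimately show "norm (\<Sum>i = m..<n. x (p i)) < e" using N by simp
    qed
  qed
qed

lemma conv_Iconv:
  fixes y :: "nat \<Rightarrow> 'a::banach"
  assumes I: "is_ideal I" and s: "summable y"
  shows "I_series_convergent I y"
proof -
  obtain L where "y sums L" using s by (auto simp: summable_def)
  then have lim: "(\<lambda>n. \<Sum>i\<le>n. y i) \<longlonglongrightarrow> L" by (simp add: sums_def_le)
  have "{n. norm ((\<Sum>i\<le>n. y i) - L) > e} \<in> I" if e: "e > 0" for e
  proof -
    obtain n0 where n0: "\<forall>n\<ge>n0. norm ((\<Sum>i\<le>n. y i) - L) < e"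
      using LIMSEQ_D[OF lim e] by blast
    have "{n. norm ((\<Sum>i\<le>n. y i) - L) > e} \<subseteq> {..<n0}"
      using n0 by (auto simp: not_less[symmetric])
    moreover have "{..<n0} \<in> I" by (rule ideal_fin[OF I]) simp
    ultimately show ?thesis using ideal_sub[OF I] by blast
  qed
  then show ?thesis unfolding I_series_convergent_def I_convergent_def by blast
qed



lemma blocks_perm:
  fixes b :: "nat \<Rightarrow> nat" and L :: "nat \<Rightarrow> nat list"
  assumes b0: "b 0 = 0" and binc: "\<And>k. b k < b (Suc k)"
    and Ld: "\<And>k. distinct (L k)" and Ls: "\<And>k. set (L k) = {b k..<b (Suc k)}"
  defines "blk \<equiv> \<lambda>m. LEAST k. m < b (Suc k)"
  defines "p \<equiv> \<lambda>m. L (blk m) ! (m - b (blk m))"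
  shows "bij p" and "\<And>k j. j < b (Suc k) - b k \<Longrightarrow> p (b k + j) = L k ! j"
proof -
  have sm: "strict_mono b" using binc by (simp add: strict_mono_Suc_iff)
  have bk: "k \<le> b k" for k by (induction k) (use binc in \<open>auto simp: Suc_le_eq intro: le_less_trans\<close>)
  have Ll: "length (L k) = b (Suc k) - b k" for k
    using distinct_card[OF Ld[of k]] Ls[of k] by simp
  have bp: "b (blk m) \<le> m \<and> m < b (Suc (blk m))" for m
  proof
    have ex: "m < b (Suc m)" using bk[of "Suc m"] by simp
    show "m < b (Suc (blk m))" unfolding blk_def by (rule LeastI[of _ m]) (rule ex)
    show "b (blk m) \<le> m"
    proof (cases "blk m")
      case 0 then show ?thesis using b0 by simp
    next
      case (Suc j)
      then have "j < (LEAST k. m < b (Suc k))" by (simp add: blk_def)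
      then have "\<not> m < b (Suc j)" by (rule not_less_Least)
      then show ?thesis using Suc by simp
    qed
  qed
  have beq: "b k \<le> m \<Longrightarrow> m < b (Suc k) \<Longrightarrow> blk m = k" for k m
    using block_unique[OF sm, of "blk m" m k] bp[of m] by simp
  show pk: "p (b k + j) = L k ! j" if "j < b (Suc k) - b k" for k j
  proof -
    have "blk (b k + j) = k" using that by (intro beq) auto
    then show ?thesis by (simp add: p_def)
  qed
  have pin: "p m \<in> {b (blk m)..<b (Suc (blk m))}" for m
  proof -
    have "m - b (blk m) < length (L (blk m))" using bp[of m] Ll by auto
    then have "p m \<in> set (L (blk m))" by (simp add: p_def)
    then show ?thesis using Ls by simp
  qed
  have "inj p"
  proof (rule injI)
    fix m1 m2 assume eq: "p m1 = p m2"
    have "blk m1 = blk m2"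
      using block_unique[OF sm, of "blk m1" "p m1" "blk m2"] pin[of m1] pin[of m2] eq by simp
    then obtain k where k: "blk m1 = k" "blk m2 = k" by blast
    have i1: "m1 - b k < length (L k)" and i2: "m2 - b k < length (L k)"
      using bp[of m1] bp[of m2] k Ll by auto
    have "L k ! (m1 - b k) = L k ! (m2 - b k)" using eq k by (simp add: p_def)
    then have "m1 - b k = m2 - b k" using nth_eq_iff_index_eq[OF Ld i1 i2] by simp
    moreover have "b k \<le> m1" "b k \<le> m2" using bp[of m1] bp[of m2] k by auto
    ultimately show "m1 = m2" by arith
  qed
  moreover have "surj p"
  proof
    show "UNIV \<subseteq> range p"
    proof
      fix y :: nat
      define k where "k = blk y"
      have "y \<in> set (L k)" using bp[of y] Ls by (simp add: k_def)
      then obtain j where j: "j < length (L k)" "L k ! j = y" by (auto simp: in_set_conv_nth)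
      have "p (b k + j) = y" using pk[of j k] j Ll by simp
      then show "y \<in> range p" by (metis rangeI)
    qed
  qed simp
  ultimately show "bij p" by (simp add: bij_def)
qed

lemma uncond_UC:
  fixes x :: "nat \<Rightarrow> 'a::banach"
  assumes u: "unconditionally_convergent x" shows "UC x"
proof (rule ccontr)
  assume "\<not> UC x"
  then obtain e :: real where e0: "e > 0" and "\<forall>N. \<not> (\<forall>F. finite F \<and> F \<subseteq> {N..} \<longrightarrow> norm (sum x F) < e)"
    unfolding UC_def by auto
  then have e: "e > 0" "\<forall>N. \<exists>F. finite F \<and> F \<subseteq> {N..} \<and> \<not> norm (sum x F) < e"
    by auto
  from choice[OF e(2)] obtain Fc where Fc: "\<And>N. finite (Fc N) \<and> Fc N \<subseteq> {N..} \<and> \<not> norm (sum x (Fc N)) < e"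
    by blast
  have Fne: "Fc N \<noteq> {}" for N using Fc[of N] e(1) by auto
  define b where "b = iter (\<lambda>k a. Suc (Max (Fc a))) 0"
  have b0: "b 0 = 0" by (simp add: b_def)
  have bS: "b (Suc k) = Suc (Max (Fc (b k)))" for k by (simp add: b_def)
  have Fsub: "Fc (b k) \<subseteq> {b k..<b (Suc k)}" for k
  proof
    fix i assume i: "i \<in> Fc (b k)"
    have "i \<le> Max (Fc (b k))" using Fc[of "b k"] i by simp
    moreover have "b k \<le> i" using Fc[of "b k"] i by auto
    ultimately show "i \<in> {b k..<b (Suc k)}" unfolding bS by simp
  qed
  have binc: "b k < b (Suc k)" for k
  proof -
    obtain i where "i \<in> Fc (b k)" using Fne by blast
    then show ?thesis using Fsub[of k] by auto
  qed
  have bk: "k \<le> b k" for k by (induction k) (use binc in \<open>auto simp: Suc_le_eq intro: le_less_trans\<close>)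
  define L where "L k = sorted_list_of_set (Fc (b k)) @ sorted_list_of_set ({b k..<b (Suc k)} - Fc (b k))" for k
  have Ld: "distinct (L k)" for k using Fc[of "b k"] by (simp add: L_def)
  have Ls: "set (L k) = {b k..<b (Suc k)}" for k using Fc[of "b k"] Fsub[of k] by (auto simp: L_def)
  define blk where "blk \<equiv> \<lambda>m. LEAST k. m < b (Suc k)"
  define p where "p \<equiv> \<lambda>m. L (blk m) ! (m - b (blk m))"
  have bij: "bij p" and pk: "\<And>k j. j < b (Suc k) - b k \<Longrightarrow> p (b k + j) = L k ! j"
    using blocks_perm[OF b0 binc Ld Ls] unfolding p_def blk_def by auto
  have "summable (\<lambda>n. x (p n))" using u bij by (simp add: unconditionally_convergent_def)
  then obtain N where N: "\<And>m n. m \<ge> N \<Longrightarrow> norm (\<Sum>i = m..<n. x (p i)) < e"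
    using e(1) unfolding summable_Cauchy by blast
  define k where "k = N"
  define S where "S = sorted_list_of_set (Fc (b k))"
  define c where "c = length S"
  have cS: "c = card (Fc (b k))" using Fc[of "b k"] by (simp add: c_def S_def)
  have cle: "c \<le> b (Suc k) - b k"
    using card_mono[OF _ Fsub[of k]] cS by simp
  have "(\<Sum>i = b k..<b k + c. x (p i)) = (\<Sum>j<c. x (p (b k + j)))"
  proof -
    have "{b k..<b k + c} = (\<lambda>j. b k + j) ` {..<c}"
    proof (intro equalityI subsetI)
      fix y assume "y \<in> {b k..<b k + c}"
      then show "y \<in> (\<lambda>j. b k + j) ` {..<c}" by (intro image_eqI[of _ _ "y - b k"]) auto
    qed auto
    then show ?thesis by (simp add: sum.reindex)
  qed
  also have "\<dots> = (\<Sum>j<c. x (S ! j))"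
  proof (intro sum.cong refl)
    fix j assume "j \<in> {..<c}"
    then have j: "j < c" by simp
    then have "p (b k + j) = L k ! j" using cle by (intro pk) simp
    also have "\<dots> = S ! j" using j by (simp add: L_def S_def c_def nth_append)
    finally show "x (p (b k + j)) = x (S ! j)" by simp
  qed
  also have "\<dots> = sum x (set S)"
    by (rule sum.reindex_bij_betw) (rule bij_betw_nth, auto simp: S_def c_def)
  also have "set S = Fc (b k)" using Fc[of "b k"] by (simp add: S_def)
  finally have "(\<Sum>i = b k..<b k + c. x (p i)) = sum x (Fc (b k))" .
  moreover have "b k \<ge> N" using bk[of k] by (simp add: k_def)
  ultimately have "norm (sum x (Fc (b k))) < e" using N[of "b k" "b k + c"] by simp
  then show False using Fc[of "b k"] by simp
qed



lemma norm_pm1: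
  fixes a x :: "'a::real_normed_vector"
  assumes "norm (a - x) \<le> norm (a + x)" shows "norm a \<le> norm (a + x)"
proof -
  have "(a + x) + (a - x) = 2 *\<^sub>R a" by (simp add: scaleR_2 algebra_simps)
  then have "2 * norm a = norm ((a + x) + (a - x))" by simp
  also have "\<dots> \<le> norm (a + x) + norm (a - x)" by (rule norm_triangle_ineq)
  finally show ?thesis using assms by simp
qed

lemma norm_pm2:
  fixes a x :: "'a::real_normed_vector"
  assumes "norm (a - x) \<le> norm (a + x)" shows "norm x \<le> norm (a + x)"
proof -
  have "(a + x) - (a - x) = 2 *\<^sub>R x" by (simp add: scaleR_2 algebra_simps)
  then have "2 * norm x = norm ((a + x) - (a - x))" by simp
  also have "\<dots> \<le> norm (a + x) + norm (a - x)" by (rule norm_triangle_ineq4)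
  finally show ?thesis using assms by simp
qed


lemma C_nd:
  fixes x :: "nat \<Rightarrow> 'a::real_normed_vector" and n :: "nat \<Rightarrow> nat"
  assumes sm: "strict_mono n" and e: "e > 0"
    and Fe: "\<And>N. \<exists>F. finite F \<and> F \<subseteq> {N..} \<and> e \<le> norm (sum x F)"
  shows "nd {t. \<forall>k\<ge>m. \<exists>j\<in>{n k..<n (Suc k)}.
            norm ((\<Sum>i\<le>j. sgn_val (t i) *\<^sub>R x i) - (\<Sum>i\<le>a. sgn_val (t i) *\<^sub>R x i)) \<le> e/2}"
    (is "nd ?C")
  unfolding nd_def
proof (intro allI)
  fix s :: "nat \<Rightarrow> bool" and N :: nat
  define N1 where "N1 = max N (Suc a)"
  obtain F where F: "finite F" "F \<subseteq> {N1..}" "e \<le> norm (sum x F)" using Fe by blast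
  have Fne: "F \<noteq> {}" using F(3) e by auto
  define P where "P = Suc (Max F)"
  have FP: "F \<subseteq> {..<P}" using F(1) by (auto simp: P_def less_Suc_eq_le)
  have N1P: "N1 < P"
  proof -
    obtain i where "i \<in> F" using Fne by blast
    then show ?thesis using F(1,2) by (auto simp: P_def less_Suc_eq_le intro: le_trans)
  qed
  define base where "base \<sigma> i = (if i < N then s i else if i \<in> F then \<sigma> else True)" for \<sigma> i
  define v where "v = sum x F"
  define c where "c = (\<Sum>i\<in>{..<P} - F. sgn_val (base True i) *\<^sub>R x i)"
  have acc0: "(\<Sum>i<P. sgn_val (base \<sigma> i) *\<^sub>R x i) = c + sgn_val \<sigma> *\<^sub>R v" for \<sigma>
  proof -
    have "(\<Sum>i<P. sgn_val (base \<sigma> i) *\<^sub>R x i) =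
      (\<Sum>i\<in>{..<P} - F. sgn_val (base \<sigma> i) *\<^sub>R x i) + (\<Sum>i\<in>F. sgn_val (base \<sigma> i) *\<^sub>R x i)"
      by (rule sum.subset_diff[OF FP]) simp
    moreover have "(\<Sum>i\<in>{..<P} - F. sgn_val (base \<sigma> i) *\<^sub>R x i) = c"
      unfolding c_def by (intro sum.cong) (auto simp: base_def)
    moreover have "(\<Sum>i\<in>F. sgn_val (base \<sigma> i) *\<^sub>R x i) = (\<Sum>i\<in>F. sgn_val \<sigma> *\<^sub>R x i)"
      using F(2) by (intro sum.cong) (auto simp: base_def N1_def)
    moreover have "(\<Sum>i\<in>F. sgn_val \<sigma> *\<^sub>R x i) = sgn_val \<sigma> *\<^sub>R v"
      by (simp add: v_def scaleR_sum_right)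
    ultimately show ?thesis by simp
  qed
  define q where "q = (\<Sum>i\<le>a. sgn_val (base True i) *\<^sub>R x i)"
  have qs: "(\<Sum>i\<le>a. sgn_val (base \<sigma> i) *\<^sub>R x i) = q" for \<sigma>
    unfolding q_def using F(2) by (intro sum.cong) (auto simp: base_def N1_def)
  define \<sigma> where "\<sigma> = (norm ((c - q) - v) \<le> norm ((c - q) + v))"
  have big0: "e \<le> norm (c + sgn_val \<sigma> *\<^sub>R v - q)"
  proof (cases \<sigma>)
    case True
    then have "norm v \<le> norm ((c - q) + v)" using norm_pm2[of "c - q" v] by (simp add: \<sigma>_def)
    then show ?thesis using True F(3) by (simp add: sgn_val_def v_def algebra_simps)
  next
    case False
    then have "norm ((c - q) - (- v)) \<le> norm ((c - q) + (- v))" by (simp add: \<sigma>_def)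
    then have "norm (- v) \<le> norm ((c - q) + (- v))" by (rule norm_pm2)
    then show ?thesis using False F(3) by (simp add: sgn_val_def v_def algebra_simps)
  qed
  define step where "step i b' = b' + sgn_val (if i < P then base \<sigma> i else norm (b' - q - x i) \<le> norm (b' - q + x i)) *\<^sub>R x i" for i b'
  define A where "A = iter step 0"
  define tt where "tt i = (if i < P then base \<sigma> i else norm (A i - q - x i) \<le> norm (A i - q + x i))" for i
  have AS: "A (Suc i) = A i + sgn_val (tt i) *\<^sub>R x i" for i
    by (simp add: A_def step_def tt_def)
  have Asum: "A i = (\<Sum>j<i. sgn_val (tt j) *\<^sub>R x j)" for i
    by (induction i) (simp_all add: A_def[symmetric] AS, simp add: A_def)
  have ps: "(\<Sum>j\<le>i. sgn_val (tt j) *\<^sub>R x j) = A (Suc i)" for i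
    by (simp add: Asum lessThan_Suc_atMost)
  have AP: "A P = c + sgn_val \<sigma> *\<^sub>R v"
    unfolding Asum acc0[symmetric] by (intro sum.cong) (auto simp: tt_def)
  have grow: "P \<le> i \<Longrightarrow> e \<le> norm (A i - q)" for i
  proof (induction i rule: dec_induct)
    case base then show ?case using AP big0 by simp
  next
    case (step i)
    show ?case
    proof (cases "norm (A i - q - x i) \<le> norm (A i - q + x i)")
      case True
      then have "tt i" using step.hyps by (simp add: tt_def)
      then have eqn: "A (Suc i) - q = (A i - q) + x i" by (simp add: AS sgn_val_def algebra_simps)
      then have "norm (A (Suc i) - q) = norm ((A i - q) + x i)" by (simp only:)
      moreover have "norm (A i - q) \<le> norm ((A i - q) + x i)" using True by (rule norm_pm1)
      ultimately show ?thesis using step.IH by linarith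
    next
      case False
      then have "\<not> tt i" using step.hyps by (simp add: tt_def)
      then have eqn: "A (Suc i) - q = (A i - q) + (- x i)" by (simp add: AS sgn_val_def algebra_simps)
      then have "norm (A (Suc i) - q) = norm ((A i - q) + (- x i))" by (simp only:)
      moreover have "norm (A i - q) \<le> norm ((A i - q) + (- x i))"
        by (rule norm_pm1) (use False in simp)
      ultimately show ?thesis using step.IH by linarith
    qed
  qed
  have tq: "(\<Sum>i\<le>a. sgn_val (tt i) *\<^sub>R x i) = q"
  proof -
    have "(\<Sum>i\<le>a. sgn_val (tt i) *\<^sub>R x i) = (\<Sum>i\<le>a. sgn_val (base \<sigma> i) *\<^sub>R x i)"
      using N1P by (intro sum.cong) (auto simp: tt_def N1_def)
    then show ?thesis using qs by simp
  qed
  define k where "k = max m P"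
  have Pk: "P \<le> n k" using strict_mono_imp_increasing[OF sm, of k] by (simp add: k_def)
  define M where "M = n (Suc k)"
  have nkM: "n k < M" using sm by (simp add: M_def strict_mono_def)
  show "\<exists>t M. N < M \<and> (\<forall>i<N. t i = s i) \<and> cyl t M \<inter> ?C = {}"
  proof (intro exI conjI)
    show "N < M" using N1P Pk nkM by (simp add: N1_def)
    show "\<forall>i<N. tt i = s i" using N1P by (auto simp: tt_def base_def N1_def)
    show "cyl tt M \<inter> ?C = {}"
    proof (rule ccontr)
      assume "cyl tt M \<inter> ?C \<noteq> {}"
      then obtain g where g: "g \<in> cyl tt M" "g \<in> ?C" by blast
      have "k \<ge> m" by (simp add: k_def)
      then obtain j where j: "j \<in> {n k..<n (Suc k)}"
        "norm ((\<Sum>i\<le>j. sgn_val (g i) *\<^sub>R x i) - (\<Sum>i\<le>a. sgn_val (g i) *\<^sub>R x i)) \<le> e/2"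
        using g(2) by blast
      have "(\<Sum>i\<le>j. sgn_val (g i) *\<^sub>R x i) = (\<Sum>i\<le>j. sgn_val (tt i) *\<^sub>R x i)"
        using g(1) j(1) by (intro sum.cong) (auto simp: cyl_def M_def)
      moreover have "(\<Sum>i\<le>a. sgn_val (g i) *\<^sub>R x i) = (\<Sum>i\<le>a. sgn_val (tt i) *\<^sub>R x i)"
        using g(1) N1P Pk nkM by (intro sum.cong) (auto simp: cyl_def N1_def)
      ultimately have "norm (A (Suc j) - q) \<le> e/2" using j(2) ps tq by simp
      moreover have "e \<le> norm (A (Suc j) - q)" using j(1) Pk by (intro grow) auto
      ultimately show False using e by simp
    qed
  qed
qed


lemma main_meager:
  fixes x :: "nat \<Rightarrow> 'a::banach" and n :: "nat \<Rightarrow> nat"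
  assumes I: "is_ideal I" and ninc: "\<forall>k. n k < n (Suc k)"
    and tal: "\<forall>A\<in>I. \<exists>m. \<forall>k\<ge>m. \<not> {n k..<n (Suc k)} \<subseteq> A"
    and e: "e > 0" and Fe: "\<And>N. \<exists>F. finite F \<and> F \<subseteq> {N..} \<and> e \<le> norm (sum x F)"
  shows "mg (B_set I x)"
proof -
  have sm: "strict_mono n" using ninc by (simp add: strict_mono_Suc_iff)
  define C where "C a m = {t. \<forall>k\<ge>m. \<exists>j\<in>{n k..<n (Suc k)}.
            norm ((\<Sum>i\<le>j. sgn_val (t i) *\<^sub>R x i) - (\<Sum>i\<le>a. sgn_val (t i) *\<^sub>R x i)) \<le> e/2}" for a m
  have ndC: "nd (C a m)" for a m
    unfolding C_def using C_nd[OF sm e Fe, of m a] .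
  have sub: "B_set I x \<subseteq> (\<Union>z. C (fst (prod_decode z)) (snd (prod_decode z)))"
  proof
    fix t assume "t \<in> B_set I x"
    then obtain L where L: "\<And>\<epsilon>. \<epsilon> > 0 \<Longrightarrow> {j. norm ((\<Sum>i\<le>j. sgn_val (t i) *\<^sub>R x i) - L) > \<epsilon>} \<in> I"
      unfolding B_set_def I_series_convergent_def I_convergent_def by auto
    define ps where "ps j = (\<Sum>i\<le>j. sgn_val (t i) *\<^sub>R x i)" for j
    have AI: "{j. norm (ps j - L) > e/4} \<in> I" using L[of "e/4"] e by (simp add: ps_def)
    have "{j. norm (ps j - L) > e/4} \<noteq> UNIV" using AI ideal_UNIV[OF I] by metis
    then obtain a where "a \<notin> {j. norm (ps j - L) > e/4}" by blast
    then have a: "norm (ps a - L) \<le> e/4" by simp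
    have "{j. norm (ps j - ps a) > e/2} \<subseteq> {j. norm (ps j - L) > e/4}"
    proof
      fix j assume "j \<in> {j. norm (ps j - ps a) > e/2}"
      then have j1: "e/2 < norm (ps j - ps a)" by simp
      show "j \<in> {j. norm (ps j - L) > e/4}"
      proof (rule ccontr)
        assume "j \<notin> {j. norm (ps j - L) > e/4}"
        then have j2: "norm (ps j - L) \<le> e/4" by simp
        have "norm (ps j - ps a) \<le> norm (ps j - L) + norm (ps a - L)"
          using norm_triangle_ineq4[of "ps j - L" "ps a - L"] by simp
        then show False using j1 j2 a by linarith
      qed
    qed
    then have "{j. norm (ps j - ps a) > e/2} \<in> I" using ideal_sub[OF I AI] by blast
    then obtain m where m: "\<forall>k\<ge>m. \<not> {n k..<n (Suc k)} \<subseteq> {j. norm (ps j - ps a) > e/2}"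
      using tal by blast
    have "t \<in> C a m"
      unfolding C_def
    proof (intro CollectI allI impI)
      fix k assume "m \<le> k"
      then obtain j where "j \<in> {n k..<n (Suc k)}" "\<not> norm (ps j - ps a) > e/2" using m by blast
      then show "\<exists>j\<in>{n k..<n (Suc k)}.
            norm ((\<Sum>i\<le>j. sgn_val (t i) *\<^sub>R x i) - (\<Sum>i\<le>a. sgn_val (t i) *\<^sub>R x i)) \<le> e/2"
        by (intro bexI[of _ j]) (auto simp: ps_def)
    qed
    then have "t \<in> C (fst (prod_decode (prod_encode (a, m)))) (snd (prod_decode (prod_encode (a, m))))"
      by simp
    then show "t \<in> (\<Union>z. C (fst (prod_decode z)) (snd (prod_decode z)))" by blast
  qed
  have "mg (\<Union>z. C (fst (prod_decode z)) (snd (prod_decode z)))"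
    unfolding mg_def using ndC by (intro exI[of _ "\<lambda>z. C (fst (prod_decode z)) (snd (prod_decode z))"]) auto
  then show ?thesis using sub mg_subset by blast
qed

theorem corollary3p5:
  fixes I :: "nat set set" and x :: "nat \<Rightarrow> 'a::banach"
  assumes "is_ideal I"
    and "baire_property (char_fun ` I)"
  shows "unconditionally_convergent x \<longleftrightarrow> \<not> meager (B_set I x)"
proof
  assume u: "unconditionally_convergent x"
  have "UC x" using uncond_UC[OF u] .
  then have "B_set I x = UNIV"
    using conv_Iconv[OF assms(1) UC_signs] by (auto simp: B_set_def)
  then show "\<not> meager (B_set I x)" using baire by (simp add: meager_iff)
next
  assume nm: "\<not> meager (B_set I x)"
  show "unconditionally_convergent x"
  proof (rule ccontr)
    assume "\<not> unconditionally_convergent x"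
    then have "\<not> UC x" using UC_uncond by blast
    then obtain e :: real where e0: "e > 0" and
      ex: "\<forall>N. \<not> (\<forall>F. finite F \<and> F \<subseteq> {N..} \<longrightarrow> norm (sum x F) < e)"
      unfolding UC_def by auto
    have Fe: "\<exists>F. finite F \<and> F \<subseteq> {N..} \<and> e \<le> norm (sum x F)" for N
      using ex by (auto simp: not_less)
    obtain n :: "nat \<Rightarrow> nat" where n: "\<forall>k. n k < n (Suc k)"
      "\<forall>A\<in>I. \<exists>m. \<forall>k\<ge>m. \<not> {n k..<n (Suc k)} \<subseteq> A"
      using talagrand[OF assms(1) ideal_meager[OF assms]] by blast
    have "mg (B_set I x)" by (rule main_meager[OF assms(1) n e0 Fe])
    then show False using nm by (simp add: meager_iff)
  qed
qed


end
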